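(* Let $0<e\le1$. For all $\sigma,k\in\mathbb{R}^3$ with $|\sigma|=|k|=1$ and all $z\in\mathbb{R}^3$, $$\big|P_{\sigma',k'}(z)-P_{k,\sigma}(z)\big|\le 2\,\frac{1-e}{e}\,|z|,$$ where $k'=\frac{(1-e)k+(1+e)\sigma}{\sqrt{2(1+e^2)+2(1-e^2)k\cdot\sigma}}$ and $\sigma'=\frac{(1+e)k+(1-e)\sigma}{\sqrt{2(1+e^2)+2(1-e^2)k\cdot\sigma}}$.
   Context: For vectors $a,b\in\mathbb{R}^3$, $P_{a,b}$ denotes the linear map $P_{a,b}(x)=(a\cdot x)\,b+(b\cdot a)\,x-(b\cdot x)\,a$. *)

theory Defs
  imports "HOL-Analysis.Analysis"
begin

definition P :: "real^3 \<Rightarrow> real^3 \<Rightarrow> real^3 \<Rightarrow> real^3" where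
  "P a b x = (a \<bullet> x) *\<^sub>R b + (b \<bullet> a) *\<^sub>R x - (b \<bullet> x) *\<^sub>R a"

end

theory Submission imports Defs begin
unbundle cross3_syntax

lemma Pexp: fixes A B :: real shows
 "P (A *\<^sub>R k + B *\<^sub>R \<sigma>) (B *\<^sub>R k + A *\<^sub>R \<sigma>) z =
   (A*A - B*B) *\<^sub>R ((k \<bullet> z) *\<^sub>R \<sigma> - (\<sigma> \<bullet> z) *\<^sub>R k)
   + (A*B*(k\<bullet>k) + (A*A+B*B)*(k\<bullet>\<sigma>) + A*B*(\<sigma>\<bullet>\<sigma>)) *\<^sub>R z"
  unfolding P_def
  by (simp add: inner_add_left inner_add_right inner_commute algebra_simps)

lemma Pscale: "P (a *\<^sub>R x) (a *\<^sub>R y) z = (a*a) *\<^sub>R P x y z"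
  unfolding P_def by (simp add: algebra_simps)

lemma wcross: "(k \<bullet> z) *\<^sub>R \<sigma> - (\<sigma> \<bullet> z) *\<^sub>R k = z \<times> (\<sigma> \<times> k)"
  by (simp add: cross3_simps forall_3)


theorem lemma2p5:
  fixes e :: real and \<sigma> k z :: "real^3"
  assumes "0 < e" and "e \<le> 1"
    and "norm \<sigma> = 1" and "norm k = 1"
    and "2 * (1 + e\<^sup>2) + 2 * (1 - e\<^sup>2) * (k \<bullet> \<sigma>) \<noteq> 0"
  shows "let D = sqrt (2 * (1 + e\<^sup>2) + 2 * (1 - e\<^sup>2) * (k \<bullet> \<sigma>));
             k' = (1 / D) *\<^sub>R ((1 - e) *\<^sub>R k + (1 + e) *\<^sub>R \<sigma>);
             \<sigma>' = (1 / D) *\<^sub>R ((1 + e) *\<^sub>R k + (1 - e) *\<^sub>R \<sigma>)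
         in norm (P \<sigma>' k' z - P k \<sigma> z) \<le> 2 * ((1 - e) / e) * norm z"
proof -
  define c where "c = k \<bullet> \<sigma>"
  define Q where "Q = 2 * (1 + e\<^sup>2) + 2 * (1 - e\<^sup>2) * c"
  define D where "D = sqrt Q"
  define w where "w = (k \<bullet> z) *\<^sub>R \<sigma> - (\<sigma> \<bullet> z) *\<^sub>R k"
  define sn where "sn = norm (\<sigma> \<times> k)"
  define a where "a = (1 - e) + (1 + e) * c"
  have kk: "k \<bullet> k = 1" and ss: "\<sigma> \<bullet> \<sigma> = 1" using assms(3,4) by (simp_all add: dot_square_norm)
  have s2: "sn\<^sup>2 = 1 - c\<^sup>2" using norm_cross_dot[of \<sigma> k] assms(3,4) unfolding sn_def c_def
    by (simp add: inner_commute)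
  have s0: "sn \<ge> 0" unfolding sn_def by simp
  have s1: "sn \<le> 1" using s2 s0 by (smt (verit) power2_eq_square zero_le_power2 mult_le_cancel_right1)
  have Qa: "Q = a\<^sup>2 + ((1 + e) * sn)\<^sup>2" unfolding Q_def a_def power_mult_distrib s2
    by (simp add: power2_eq_square algebra_simps)
  have Q0: "Q \<noteq> 0" using assms(5) unfolding Q_def c_def .
  have Qpos: "Q > 0" using Q0 Qa by (smt (verit) zero_le_power2)
  have DD: "D * D = Q" unfolding D_def using Qpos by simp
  have nw: "norm w \<le> norm z * sn"
  proof -
    have "w = z \<times> (\<sigma> \<times> k)" unfolding w_def by (rule wcross)
    hence "(norm w)^2 \<le> (norm z * sn)^2" using norm_cross_dot[of z "\<sigma> \<times> k"] unfolding sn_def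
      by (smt (verit) zero_le_power2)
    thus ?thesis using s0 by (simp add: power2_le_iff_abs_le)
  qed
  have PP: "P ((1/D) *\<^sub>R ((1 + e) *\<^sub>R k + (1 - e) *\<^sub>R \<sigma>)) ((1/D) *\<^sub>R ((1 - e) *\<^sub>R k + (1 + e) *\<^sub>R \<sigma>)) z
     = (1/Q) *\<^sub>R ((4*e) *\<^sub>R w + (2*(1-e\<^sup>2) + 2*(1+e\<^sup>2)*c) *\<^sub>R z)"
    unfolding Pscale Pexp using DD kk ss
    by (simp add: w_def c_def power2_eq_square algebra_simps inner_commute)
  have Pks: "P k \<sigma> z = w + c *\<^sub>R z" unfolding P_def w_def c_def by (simp add: inner_commute algebra_simps)
  have diff: "P ((1/D) *\<^sub>R ((1 + e) *\<^sub>R k + (1 - e) *\<^sub>R \<sigma>)) ((1/D) *\<^sub>R ((1 - e) *\<^sub>R k + (1 + e) *\<^sub>R \<sigma>)) z - P k \<sigma> z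
     = (- 2*(1-e)*a/Q) *\<^sub>R w + (2*(1-e\<^sup>2)* sn\<^sup>2/Q) *\<^sub>R z"
  proof -
    have e1: "- 2*(1-e)*a/Q = 4*e/Q - 1" using Q0 unfolding a_def Q_def
      by (simp add: field_simps power2_eq_square)
    have e2: "2*(1-e\<^sup>2)* sn\<^sup>2/Q = (2*(1-e\<^sup>2) + 2*(1+e\<^sup>2)*c)/Q - c" using Q0 unfolding s2 Q_def
      by (simp add: field_simps power2_eq_square)
    show ?thesis unfolding PP Pks e1 e2
      by (simp add: scaleR_diff_left scaleR_diff_right scaleR_add_right scaleR_add_left diff_divide_distrib add_divide_distrib)
  qed
  have "norm ((- 2*(1-e)*a/Q) *\<^sub>R w + (2*(1-e\<^sup>2)* sn\<^sup>2/Q) *\<^sub>R z)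
      \<le> \<bar>- 2*(1-e)*a/Q\<bar> * norm w + \<bar>2*(1-e\<^sup>2)* sn\<^sup>2/Q\<bar> * norm z"
    by (rule order_trans[OF norm_triangle_ineq]) (simp only: norm_scaleR order_refl)
  also have "\<dots> \<le> (2*(1-e)*\<bar>a\<bar>/Q) * (norm z * sn) + (2*(1-e\<^sup>2)* sn\<^sup>2/Q) * norm z"
  proof -
    have "\<bar>- 2*(1-e)*a/Q\<bar> = 2*(1-e)*\<bar>a\<bar>/Q" using Qpos assms(2) by (simp add: abs_mult)
    moreover have "\<bar>2*(1-e\<^sup>2)* sn\<^sup>2/Q\<bar> = 2*(1-e\<^sup>2)* sn\<^sup>2/Q" using Qpos assms(1,2)
      by (simp add: power_le_one)
    moreover have "2*(1-e)*\<bar>a\<bar>/Q \<ge> 0" using Qpos assms(2) by simp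
    ultimately show ?thesis using add_right_mono[OF mult_left_mono[OF nw]] by metis
  qed
  also have "\<dots> = (2*(1-e)/Q) * (\<bar>a\<bar>* sn + (1+e)* sn\<^sup>2) * norm z"
    using Qpos by (simp add: field_simps power2_eq_square)
  also have "\<dots> \<le> 2 * ((1 - e) / e) * norm z"
  proof -
    define u where "u = \<bar>a\<bar>"
    define v where "v = (1+e)* sn"
    have u0: "u \<ge> 0" unfolding u_def by simp
    have v0: "v \<ge> 0" unfolding v_def using s0 assms(1) by simp
    have esv: "e* sn \<le> v/2" unfolding v_def using s0 assms(2) using assms(1) by (simp add: algebra_simps mult_left_le_one_le)
    have Quv: "Q = u\<^sup>2 + v\<^sup>2" unfolding u_def v_def Qa by simp
    have key: "e * (u* sn + (1+e)* sn\<^sup>2) \<le> Q"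
    proof -
      have "e * (u* sn + (1+e)* sn\<^sup>2) = (e* sn)*(u+v)" unfolding v_def by (simp add: algebra_simps power2_eq_square)
      also have "\<dots> \<le> (v/2)*(u+v)" using mult_right_mono[OF esv, of "u+v"] u0 v0 by simp
      also have "\<dots> \<le> u\<^sup>2 + v\<^sup>2"
      proof -
        have h0: "0 \<le> (u - v)\<^sup>2" by simp
        have h1: "(u - v)\<^sup>2 = u\<^sup>2 - 2*(u* v) + v\<^sup>2" by (simp add: power2_diff)
        have h2: "(v/2)*(u+v) = (u* v)/2 + v\<^sup>2/2" by (simp add: power2_eq_square algebra_simps)
        have h3: "0 \<le> u\<^sup>2" "0 \<le> v\<^sup>2" by simp_all
        show ?thesis using h0 h1 h2 h3 by linarith
      qed
      finally show ?thesis using Quv by simp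
    qed
    have "(2*(1-e)/Q) * (u* sn + (1+e)* sn\<^sup>2) \<le> 2 * ((1 - e) / e)"
    proof -
      have "(u* sn + (1+e)* sn\<^sup>2) \<le> Q / e" using key assms(1) by (simp add: field_simps)
      hence "(2*(1-e)/Q) * (u* sn + (1+e)* sn\<^sup>2) \<le> (2*(1-e)/Q) * (Q/e)"
        using Qpos assms(2) by (intro mult_left_mono) auto
      also have "\<dots> = 2 * ((1 - e) / e)" using Qpos by simp
      finally show ?thesis .
    qed
    thus ?thesis unfolding u_def using mult_right_mono[of _ _ "norm z"] by (metis norm_ge_zero)
  qed
  finally have "norm (P ((1/D) *\<^sub>R ((1 + e) *\<^sub>R k + (1 - e) *\<^sub>R \<sigma>)) ((1/D) *\<^sub>R ((1 - e) *\<^sub>R k + (1 + e) *\<^sub>R \<sigma>)) z - P k \<sigma> z)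
     \<le> 2 * ((1 - e) / e) * norm z" unfolding diff .
  thus ?thesis unfolding Let_def D_def Q_def c_def by simp
qed

end
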